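(* Let $N^{[0]}$ be a $C^0$ net on the grid $T^{[0]}$ with lines $s^{[0]}_i=t^{[0]}_i=i$, $i\in\mathbb{Z}$, and let $N^{[k]}$, $k\ge0$, be the nets generated from $N^{[0]}$ by the corner cutting algorithm for nets of functions (described in the context) with arbitrary weights $\boldsymbol{\gamma}^{[s],[k]},\boldsymbol{\gamma}^{[t],[k]}\in\mathscr{W}$. If $N^{[0]}$ has the BMSDD property with constant $L$, then $N^{[k]}$ has the BMSDD property with constant $3^kL$ for every $k\ge0$.
   Context: $\mathscr{W}$ is the set of pairs $(\boldsymbol{\alpha},\boldsymbol{\beta})$ of real bi-infinite sequences with $\inf_i\min\{\alpha_i,1-\beta_i,\beta_i-\alpha_i\}>0$. For strictly increasing bi-infinite real sequences $(s_i)$, $(t_j)$, unbounded above and below, the grid is $T=\bigcup_i\{s_i\}\times\mathbb{R}\cup\bigcup_j\mathbb{R}\times\{t_j\}$. A net $N(T)$ is a function on $T$ with values in $\mathbb{R}^m$; it is $C^0$ if all u-functions $s\mapsto N(s,t_j)$, $t\mapsto N(s_i,t)$ are continuous. The piecewise Coons patch $\mathcal{C}(N)$ is defined on each rectangle $[s_i,s_{i+1}]\times[t_j,t_{j+1}]$, with $h_1=s_{i+1}-s_i$, $h_2=t_{j+1}-t_j$, by $\mathcal{C}(N)(s,t)=\frac{s_{i+1}-s}{h_1}N(s_i,t)+\frac{s-s_i}{h_1}N(s_{i+1},t)+\frac{t_{j+1}-t}{h_2}N(s,t_j)+\frac{t-t_j}{h_2}N(s,t_{j+1})-B(s,t)$,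 with $B(s,t)=\frac{s_{i+1}-s}{h_1}\big(\frac{t_{j+1}-t}{h_2}N(s_i,t_j)+\frac{t-t_j}{h_2}N(s_i,t_{j+1})\big)+\frac{s-s_i}{h_1}\big(\frac{t_{j+1}-t}{h_2}N(s_{i+1},t_j)+\frac{t-t_j}{h_2}N(s_{i+1},t_{j+1})\big)$. Algorithm: given $N^{[k]}$ on grid $T^{[k]}$ with lines $s^{[k]}_i,t^{[k]}_j$, set $s^{[k+1]}_{2i}=(1-\alpha^{[s],[k]}_i)s^{[k]}_i+\alpha^{[s],[k]}_is^{[k]}_{i+1}$, $s^{[k+1]}_{2i+1}=(1-\beta^{[s],[k]}_i)s^{[k]}_i+\beta^{[s],[k]}_is^{[k]}_{i+1}$, and analogously for $t^{[k+1]}$ with $\boldsymbol{\gamma}^{[t],[k]}=(\boldsymbol{\alpha}^{[t],[k]},\boldsymbol{\beta}^{[t],[k]})$; $T^{[k+1]}$ is the grid with these lines and $N^{[k+1]}=\mathcal{C}(N^{[k]})|_{T^{[k+1]}}$. For $\sigma_1\ne\sigma_2$, $\tau_1\ne\tau_2$, $[\sigma_1,\sigma_2;\tau_1,\tau_2]N=\frac{N(\sigma_1,\tau_1)+N(\sigma_2,\tau_2)-N(\sigma_2,\tau_1)-N(\sigma_1,\tau_2)}{(\sigma_1-\sigma_2)(\tau_1-\tau_2)}$; a net on a grid has the BMSDD property with constant $L$ if $\|[\sigma_1,\sigma_2;\tau_1,\tau_2]N\|_\infty\le L$ whenever all four points $(\sigma_i,\tau_j)$ lie on the grid. *)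

theory Defs
  imports "HOL-Analysis.Analysis"
begin

text \<open>Weights: pairs of bi-infinite sequences in the class W.
  The condition inf_i min(alpha_i, 1 - beta_i, beta_i - alpha_i) > 0 is written out
  as the existence of a uniform positive lower bound.\<close>
definition weightW :: "(int \<Rightarrow> real) \<Rightarrow> (int \<Rightarrow> real) \<Rightarrow> bool" where
  "weightW \<alpha> \<beta> \<longleftrightarrow>
     (\<exists>\<delta>>0. \<forall>i. \<delta> \<le> \<alpha> i \<and> \<delta> \<le> 1 - \<beta> i \<and> \<delta> \<le> \<beta> i - \<alpha> i)"

definition grid :: "(int \<Rightarrow> real) \<Rightarrow> (int \<Rightarrow> real) \<Rightarrow> (real \<times> real) set" where
  "grid s t = {(x, y). (\<exists>i. x = s i) \<or> (\<exists>j. y = t j)}"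

definition cell_idx :: "(int \<Rightarrow> real) \<Rightarrow> real \<Rightarrow> int" where
  "cell_idx s x = (THE i. s i \<le> x \<and> x < s (i + 1))"

definition coons :: "(int \<Rightarrow> real) \<Rightarrow> (int \<Rightarrow> real) \<Rightarrow> (real \<times> real \<Rightarrow> 'a::real_vector)
    \<Rightarrow> real \<times> real \<Rightarrow> 'a" where
  "coons s t N = (\<lambda>(x, y).
     let i = cell_idx s x; j = cell_idx t y;
         h1 = s (i + 1) - s i; h2 = t (j + 1) - t j;
         a0 = (s (i + 1) - x) / h1; a1 = (x - s i) / h1;
         b0 = (t (j + 1) - y) / h2; b1 = (y - t j) / h2;
         B = a0 *\<^sub>R (b0 *\<^sub>R N (s i, t j) + b1 *\<^sub>R N (s i, t (j + 1)))
           + a1 *\<^sub>R (b0 *\<^sub>R N (s (i + 1), t j) + b1 *\<^sub>R N (s (i + 1), t (j + 1)))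
     in a0 *\<^sub>R N (s i, y) + a1 *\<^sub>R N (s (i + 1), y)
        + b0 *\<^sub>R N (x, t j) + b1 *\<^sub>R N (x, t (j + 1)) - B)"

definition refine :: "(int \<Rightarrow> real) \<Rightarrow> (int \<Rightarrow> real) \<Rightarrow> (int \<Rightarrow> real) \<Rightarrow> int \<Rightarrow> real" where
  "refine \<alpha> \<beta> s = (\<lambda>m. let i = m div 2 in
      if even m then (1 - \<alpha> i) * s i + \<alpha> i * s (i + 1)
      else (1 - \<beta> i) * s i + \<beta> i * s (i + 1))"

definition C0_net :: "(int \<Rightarrow> real) \<Rightarrow> (int \<Rightarrow> real) \<Rightarrow> (real \<times> real \<Rightarrow> 'a::topological_space) \<Rightarrow> bool" where
  "C0_net s t N \<longleftrightarrow> (\<forall>j. continuous_on UNIV (\<lambda>x. N (x, t j))) \<and>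
                     (\<forall>i. continuous_on UNIV (\<lambda>y. N (s i, y)))"

definition mdd :: "(real \<times> real \<Rightarrow> 'a::real_vector) \<Rightarrow> real \<Rightarrow> real \<Rightarrow> real \<Rightarrow> real \<Rightarrow> 'a" where
  "mdd N \<sigma>1 \<sigma>2 \<tau>1 \<tau>2 = (1 / ((\<sigma>1 - \<sigma>2) * (\<tau>1 - \<tau>2))) *\<^sub>R
      (N (\<sigma>1, \<tau>1) + N (\<sigma>2, \<tau>2) - N (\<sigma>2, \<tau>1) - N (\<sigma>1, \<tau>2))"

definition BMSDD :: "(int \<Rightarrow> real) \<Rightarrow> (int \<Rightarrow> real) \<Rightarrow> (real \<times> real \<Rightarrow> 'a::euclidean_space) \<Rightarrow> real \<Rightarrow> bool" where
  "BMSDD s t N L \<longleftrightarrow> (\<forall>\<sigma>1 \<sigma>2 \<tau>1 \<tau>2. \<sigma>1 \<noteq> \<sigma>2 \<longrightarrow> \<tau>1 \<noteq> \<tau>2 \<longrightarrow>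
      (\<sigma>1, \<tau>1) \<in> grid s t \<longrightarrow> (\<sigma>1, \<tau>2) \<in> grid s t \<longrightarrow>
      (\<sigma>2, \<tau>1) \<in> grid s t \<longrightarrow> (\<sigma>2, \<tau>2) \<in> grid s t \<longrightarrow>
      infnorm (mdd N \<sigma>1 \<sigma>2 \<tau>1 \<tau>2) \<le> L)"

end

theory Submission
  imports Defs
begin

definition good :: "(int \<Rightarrow> real) \<Rightarrow> bool" where
  "good s \<longleftrightarrow> (\<forall>i. s i < s (i+1)) \<and> (\<forall>x. \<exists>i. x < s i) \<and> (\<forall>x. \<exists>i. s i < x)"

lemma good_mono: assumes "good s" "i \<le> j" shows "s i \<le> s j"
proof -
  obtain n where j: "j = i + int n" using assms(2) zle_iff_zadd by blast
  have "s i \<le> s (i + int n)" for n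
  proof (induction n)
    case 0 then show ?case by simp
  next
    case (Suc n)
    have "s (i + int n) < s (i + int n + 1)" using assms(1) unfolding good_def by blast
    moreover have "i + int (Suc n) = i + int n + 1" by simp
    ultimately show ?case using Suc by (metis less_eq_real_def order_trans)
  qed
  then show ?thesis using j by simp
qed

lemma cell_exists: assumes "good s" shows "\<exists>i. s i \<le> x \<and> x < s (i+1)"
proof -
  obtain j where j: "x < s j" using assms unfolding good_def by blast
  obtain i0 where i0: "s i0 < x" using assms unfolding good_def by blast
  have ij: "i0 < j" using good_mono[OF assms, of j i0] i0 j by linarith
  have "\<forall>i. s i \<le> x \<longrightarrow> x < s (i + int n) \<longrightarrow> (\<exists>i. s i \<le> x \<and> x < s (i+1))" for n
  proof (induction n)
    case 0 then show ?case by auto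
  next
    case (Suc n)
    show ?case
    proof (intro allI impI)
      fix i assume a: "s i \<le> x" "x < s (i + int (Suc n))"
      show "\<exists>i. s i \<le> x \<and> x < s (i+1)"
      proof (cases "x < s (i+1)")
        case True then show ?thesis using a by blast
      next
        case False
        then have "s (i+1) \<le> x" by simp
        moreover have "x < s ((i+1) + int n)" using a(2) by (simp add: add_ac)
        ultimately show ?thesis using Suc by blast
      qed
    qed
  qed
  from this[of "nat (j - i0)"] have "\<forall>i. s i \<le> x \<longrightarrow> x < s (i + (j - i0)) \<longrightarrow> (\<exists>i. s i \<le> x \<and> x < s (i+1))"
    using ij by simp
  then show ?thesis using i0 j by (metis add.commute diff_add_cancel less_eq_real_def)
qed

lemma cell_unique: assumes "good s" "s i \<le> x" "x < s (i+1)" "s j \<le> x" "x < s (j+1)"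
  shows "i = j"
proof (rule ccontr)
  assume "i \<noteq> j"
  then consider "i + 1 \<le> j" | "j + 1 \<le> i" by linarith
  then show False
  proof cases
    case 1 then show ?thesis using good_mono[OF assms(1) 1] assms by linarith
  next
    case 2 then show ?thesis using good_mono[OF assms(1) 2] assms by linarith
  qed
qed

lemma cell_idx_prop: assumes "good s"
  shows "s (cell_idx s x) \<le> x \<and> x < s (cell_idx s x + 1)"
proof -
  have "\<exists>!i. s i \<le> x \<and> x < s (i+1)"
    using cell_exists[OF assms] cell_unique[OF assms] by blast
  then show ?thesis unfolding cell_idx_def by (rule theI')
qed

lemma cell_idx_eq: assumes "good s" "s i \<le> x" "x < s (i+1)" shows "cell_idx s x = i"
  using cell_idx_prop[OF assms(1), of x] cell_unique[OF assms(1)] assms by metis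

definition PL :: "(int \<Rightarrow> real) \<Rightarrow> (int \<Rightarrow> real) \<Rightarrow> real \<Rightarrow> real" where
  "PL s g x = (let i = cell_idx s x; h = s (i+1) - s i in
     ((s (i+1) - x) / h) * g i + ((x - s i) / h) * g (i+1))"

lemma PL_diff: "PL s (\<lambda>i. f i - g i) x = PL s f x - PL s g x"
  unfolding PL_def Let_def by (simp add: right_diff_distrib)

lemma good_lt: "good s \<Longrightarrow> s i < s (i+1)" unfolding good_def by blast

lemma PL_closed: assumes "good s" "s i \<le> x" "x \<le> s (i+1)"
  shows "PL s g x = ((s (i+1) - x) / (s (i+1) - s i)) * g i + ((x - s i) / (s (i+1) - s i)) * g (i+1)"
proof (cases "x < s (i+1)")
  case True then show ?thesis using cell_idx_eq[OF assms(1) assms(2) True] by (simp add: PL_def Let_def)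
next
  case False
  then have x: "x = s (i+1)" using assms by simp
  have c: "cell_idx s x = i + 1" using cell_idx_eq[OF assms(1), of "i+1" x] x good_lt[OF assms(1), of "i+1"] by simp
  have ne: "s (i+1) - s i \<noteq> 0" "s (i+1+1) - s (i+1) \<noteq> 0" using good_lt[OF assms(1), of i] good_lt[OF assms(1), of "i+1"] by auto
  show ?thesis unfolding PL_def Let_def c using x ne by simp
qed

lemma PL_seg: assumes "good s" "\<And>i. \<bar>g (i+1) - g i\<bar> \<le> K * (s (i+1) - s i)"
  and "s i \<le> x1" "x1 \<le> x2" "x2 \<le> s (i+1)"
  shows "\<bar>PL s g x2 - PL s g x1\<bar> \<le> K * (x2 - x1)"
proof -
  define h where "h = s (i+1) - s i"
  have h: "h > 0" using good_lt[OF assms(1), of i] h_def by simp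
  have e2: "PL s g x2 = ((s (i+1) - x2) / h) * g i + ((x2 - s i) / h) * g (i+1)"
    using PL_closed[OF assms(1), of i x2 g] assms unfolding h_def by simp
  have e1: "PL s g x1 = ((s (i+1) - x1) / h) * g i + ((x1 - s i) / h) * g (i+1)"
    using PL_closed[OF assms(1), of i x1 g] assms unfolding h_def by simp
  have "PL s g x2 - PL s g x1 = ((x2 - x1) / h) * (g (i+1) - g i)"
    unfolding e1 e2 using h by (simp add: field_simps)
  then have "\<bar>PL s g x2 - PL s g x1\<bar> = ((x2 - x1) / h) * \<bar>g (i+1) - g i\<bar>"
    using assms h by (simp add: abs_mult)
  also have "\<dots> \<le> ((x2 - x1) / h) * (K * h)"
    using assms(2)[of i] h assms(4) unfolding h_def by (intro mult_left_mono) auto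
  also have "\<dots> = K * (x2 - x1)" using h by simp
  finally show ?thesis .
qed

lemma PL_lip: assumes "good s" "\<And>i. \<bar>g (i+1) - g i\<bar> \<le> K * (s (i+1) - s i)"
  shows "\<bar>PL s g x1 - PL s g x2\<bar> \<le> K * \<bar>x1 - x2\<bar>"
proof -
  let ?c = "cell_idx s"
  have main: "\<forall>x1 x2. x1 \<le> x2 \<longrightarrow> ?c x2 = ?c x1 + int n \<longrightarrow>
      \<bar>PL s g x2 - PL s g x1\<bar> \<le> K * (x2 - x1)" for n
  proof (induction n)
    case 0
    show ?case
    proof (intro allI impI)
      fix x1 x2 :: real assume a: "x1 \<le> x2" "?c x2 = ?c x1 + int 0"
      show "\<bar>PL s g x2 - PL s g x1\<bar> \<le> K * (x2 - x1)"
        using PL_seg[OF assms, of "?c x1" x1 x2] a cell_idx_prop[OF assms(1), of x1]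
          cell_idx_prop[OF assms(1), of x2] by simp
    qed
  next
    case (Suc n)
    show ?case
    proof (intro allI impI)
      fix x1 x2 :: real assume a: "x1 \<le> x2" "?c x2 = ?c x1 + int (Suc n)"
      define i where "i = ?c x1"
      define m where "m = s (i+1)"
      have x1: "s i \<le> x1" "x1 < m" using cell_idx_prop[OF assms(1), of x1] unfolding i_def m_def by auto
      have "s (i+1) \<le> s (?c x2)" using a(2) unfolding i_def by (intro good_mono[OF assms(1)]) simp
      then have mx2: "m \<le> x2" using cell_idx_prop[OF assms(1), of x2] unfolding m_def by linarith
      have cm: "?c m = i + 1" using cell_idx_eq[OF assms(1), of "i+1" m] good_lt[OF assms(1), of "i+1"]
        unfolding m_def by simp
      have 1: "\<bar>PL s g m - PL s g x1\<bar> \<le> K * (m - x1)"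
        using PL_seg[OF assms, of i x1 m] x1 unfolding m_def by simp
      have 2: "\<bar>PL s g x2 - PL s g m\<bar> \<le> K * (x2 - m)"
        using Suc[rule_format, of m x2] mx2 cm a(2) unfolding i_def by simp
      show "\<bar>PL s g x2 - PL s g x1\<bar> \<le> K * (x2 - x1)"
        using 1 2 by (simp add: algebra_simps)
    qed
  qed
  have gen: "\<bar>PL s g x2 - PL s g x1\<bar> \<le> K * (x2 - x1)" if "x1 \<le> x2" for x1 x2
  proof -
    have "?c x1 \<le> ?c x2"
    proof (rule ccontr)
      assume "\<not> ?c x1 \<le> ?c x2"
      then have "s (?c x2 + 1) \<le> s (?c x1)" by (intro good_mono[OF assms(1)]) simp
      then show False using cell_idx_prop[OF assms(1), of x1] cell_idx_prop[OF assms(1), of x2] that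
        by linarith
    qed
    then show ?thesis using main[of "nat (?c x2 - ?c x1)"] that by auto
  qed
  show ?thesis
  proof (cases "x1 \<le> x2")
    case True then show ?thesis using gen[OF True] by (simp add: abs_minus_commute)
  next
    case False then show ?thesis using gen[of x2 x1] by simp
  qed
qed

lemma mdd_num:
  fixes M :: "real \<times> real \<Rightarrow> real"
  assumes "\<sigma>1 \<noteq> \<sigma>2" "\<tau>1 \<noteq> \<tau>2" "\<bar>mdd M \<sigma>1 \<sigma>2 \<tau>1 \<tau>2\<bar> \<le> L"
  shows "\<bar>M (\<sigma>1, \<tau>1) + M (\<sigma>2, \<tau>2) - M (\<sigma>2, \<tau>1) - M (\<sigma>1, \<tau>2)\<bar> \<le> L * \<bar>\<sigma>1 - \<sigma>2\<bar> * \<bar>\<tau>1 - \<tau>2\<bar>"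
proof -
  let ?n = "M (\<sigma>1, \<tau>1) + M (\<sigma>2, \<tau>2) - M (\<sigma>2, \<tau>1) - M (\<sigma>1, \<tau>2)"
  have d: "(\<sigma>1 - \<sigma>2) * (\<tau>1 - \<tau>2) \<noteq> 0" using assms by simp
  have "?n = ((\<sigma>1 - \<sigma>2) * (\<tau>1 - \<tau>2)) * mdd M \<sigma>1 \<sigma>2 \<tau>1 \<tau>2"
    unfolding mdd_def using d by simp
  then have "\<bar>?n\<bar> = (\<bar>\<sigma>1 - \<sigma>2\<bar> * \<bar>\<tau>1 - \<tau>2\<bar>) * \<bar>mdd M \<sigma>1 \<sigma>2 \<tau>1 \<tau>2\<bar>"
    by (simp add: abs_mult)
  also have "\<dots> \<le> (\<bar>\<sigma>1 - \<sigma>2\<bar> * \<bar>\<tau>1 - \<tau>2\<bar>) * L"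
    using assms(3) by (intro mult_left_mono) auto
  finally show ?thesis by (simp add: mult_ac)
qed

lemma genP:
  assumes "good s"
    and H: "\<And>i y1 y2. \<bar>F (i+1) y1 - F (i+1) y2 - (F i y1 - F i y2)\<bar> \<le> L * (s (i+1) - s i) * \<bar>y1 - y2\<bar>"
    and "x1 \<noteq> x2" "y1 \<noteq> y2"
  shows "\<bar>mdd (\<lambda>(x,y). PL s (\<lambda>i. F i y) x) x1 x2 y1 y2\<bar> \<le> L"
proof -
  define G where "G i = F i y1 - F i y2" for i
  have num: "PL s (\<lambda>i. F i y1) x1 + PL s (\<lambda>i. F i y2) x2 - PL s (\<lambda>i. F i y1) x2 - PL s (\<lambda>i. F i y2) x1
     = PL s G x1 - PL s G x2" unfolding G_def PL_diff by simp
  have lip: "\<bar>PL s G x1 - PL s G x2\<bar> \<le> (L * \<bar>y1 - y2\<bar>) * \<bar>x1 - x2\<bar>"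
    by (rule PL_lip[OF assms(1)]) (use H in \<open>simp add: G_def mult_ac\<close>)
  have pos: "0 < \<bar>x1 - x2\<bar> * \<bar>y1 - y2\<bar>" using assms by simp
  have "mdd (\<lambda>(x,y). PL s (\<lambda>i. F i y) x) x1 x2 y1 y2 = (PL s G x1 - PL s G x2) / ((x1 - x2) * (y1 - y2))"
    unfolding mdd_def using num by simp
  then have "\<bar>mdd (\<lambda>(x,y). PL s (\<lambda>i. F i y) x) x1 x2 y1 y2\<bar> = \<bar>PL s G x1 - PL s G x2\<bar> / (\<bar>x1 - x2\<bar> * \<bar>y1 - y2\<bar>)"
    by (simp add: abs_mult)
  also have "\<dots> \<le> L" using pos lip by (simp add: pos_divide_le_eq mult_ac)
  finally show ?thesis .
qed

lemma coons_decomp: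
  fixes M :: "real \<times> real \<Rightarrow> real"
  shows "coons s t M (x, y) = PL s (\<lambda>i. M (s i, y)) x + PL t (\<lambda>j. M (x, t j)) y
     - PL s (\<lambda>i. PL t (\<lambda>j. M (s i, t j)) y) x"
  unfolding coons_def PL_def Let_def by simp

lemma mdd_lin:
  fixes f g h :: "real \<times> real \<Rightarrow> real"
  shows "mdd (\<lambda>p. f p + g p - h p) a b c d = mdd f a b c d + mdd g a b c d - mdd h a b c d"
proof -
  define D where "D = 1 / ((a - b) * (c - d))"
  show ?thesis unfolding mdd_def D_def[symmetric] by (simp add: algebra_simps)
qed

lemma core:
  fixes M :: "real \<times> real \<Rightarrow> real"
  assumes gs: "good s" and gt: "good t"
    and H: "\<And>\<sigma>1 \<sigma>2 \<tau>1 \<tau>2. \<sigma>1 \<noteq> \<sigma>2 \<Longrightarrow> \<tau>1 \<noteq> \<tau>2 \<Longrightarrow>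
      (\<sigma>1, \<tau>1) \<in> grid s t \<Longrightarrow> (\<sigma>1, \<tau>2) \<in> grid s t \<Longrightarrow>
      (\<sigma>2, \<tau>1) \<in> grid s t \<Longrightarrow> (\<sigma>2, \<tau>2) \<in> grid s t \<Longrightarrow>
      \<bar>mdd M \<sigma>1 \<sigma>2 \<tau>1 \<tau>2\<bar> \<le> L"
    and x: "x1 \<noteq> x2" and y: "y1 \<noteq> y2"
  shows "\<bar>mdd (coons s t M) x1 x2 y1 y2\<bar> \<le> 3 * L"
proof -
  have gS: "(s i, y) \<in> grid s t" for i y unfolding grid_def by blast
  have gT: "(x, t j) \<in> grid s t" for x j unfolding grid_def by blast
  have ds: "s (i+1) \<noteq> s i" for i using good_lt[OF gs, of i] by simp
  have dt: "t (j+1) \<noteq> t j" for j using good_lt[OF gt, of j] by simp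
  have as: "\<bar>s (i+1) - s i\<bar> = s (i+1) - s i" for i using good_lt[OF gs, of i] by simp
  have at: "\<bar>t (j+1) - t j\<bar> = t (j+1) - t j" for j using good_lt[OF gt, of j] by simp
  define P1 where "P1 = (\<lambda>(x,y). PL s (\<lambda>i. M (s i, y)) x)"
  define P2 where "P2 = (\<lambda>(x,y). PL t (\<lambda>j. M (x, t j)) y)"
  define P12 where "P12 = (\<lambda>(x,y). PL s (\<lambda>i. PL t (\<lambda>j. M (s i, t j)) y) x)"
  have C: "coons s t M = (\<lambda>p. P1 p + P2 p - P12 p)"
    by (rule ext, case_tac p) (simp add: coons_decomp P1_def P2_def P12_def)
  have b1: "\<bar>mdd P1 x1 x2 y1 y2\<bar> \<le> L"
    unfolding P1_def
  proof (rule genP[OF gs _ x y])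
    fix i and z1 z2 :: real
    show "\<bar>M (s (i+1), z1) - M (s (i+1), z2) - (M (s i, z1) - M (s i, z2))\<bar> \<le> L * (s (i+1) - s i) * \<bar>z1 - z2\<bar>"
    proof (cases "z1 = z2")
      case True then show ?thesis by simp
    next
      case False
      have "\<bar>M (s (i+1), z1) + M (s i, z2) - M (s i, z1) - M (s (i+1), z2)\<bar> \<le> L * \<bar>s (i+1) - s i\<bar> * \<bar>z1 - z2\<bar>"
        by (rule mdd_num[OF ds False H[OF ds False gS gS gS gS]])
      then show ?thesis unfolding as by (smt (verit))
    qed
  qed
  have b12: "\<bar>mdd P12 x1 x2 y1 y2\<bar> \<le> L"
    unfolding P12_def
  proof (rule genP[OF gs _ x y])
    fix i and z1 z2 :: real
    define Hf where "Hf j = M (s (i+1), t j) - M (s i, t j)" for j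
    have e: "PL t (\<lambda>j. M (s (i+1), t j)) z1 - PL t (\<lambda>j. M (s (i+1), t j)) z2 -
        (PL t (\<lambda>j. M (s i, t j)) z1 - PL t (\<lambda>j. M (s i, t j)) z2) = PL t Hf z1 - PL t Hf z2"
      unfolding Hf_def PL_diff by simp
    have "\<bar>PL t Hf z1 - PL t Hf z2\<bar> \<le> (L * (s (i+1) - s i)) * \<bar>z1 - z2\<bar>"
    proof (rule PL_lip[OF gt])
      fix j
      have "\<bar>M (s (i+1), t (j+1)) + M (s i, t j) - M (s i, t (j+1)) - M (s (i+1), t j)\<bar>
          \<le> L * \<bar>s (i+1) - s i\<bar> * \<bar>t (j+1) - t j\<bar>"
        by (rule mdd_num[OF ds dt H[OF ds dt gS gS gS gS]])
      then show "\<bar>Hf (j+1) - Hf j\<bar> \<le> L * (s (i+1) - s i) * (t (j+1) - t j)"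
        unfolding as at Hf_def by (smt (verit))
    qed
    then show "\<bar>PL t (\<lambda>j. M (s (i+1), t j)) z1 - PL t (\<lambda>j. M (s (i+1), t j)) z2 -
        (PL t (\<lambda>j. M (s i, t j)) z1 - PL t (\<lambda>j. M (s i, t j)) z2)\<bar> \<le> L * (s (i+1) - s i) * \<bar>z1 - z2\<bar>"
      unfolding e by simp
  qed
  have b2': "\<bar>mdd (\<lambda>(y,x). PL t (\<lambda>j. M (x, t j)) y) y1 y2 x1 x2\<bar> \<le> L"
  proof (rule genP[OF gt _ y x])
    fix j and z1 z2 :: real
    show "\<bar>M (z1, t (j+1)) - M (z2, t (j+1)) - (M (z1, t j) - M (z2, t j))\<bar> \<le> L * (t (j+1) - t j) * \<bar>z1 - z2\<bar>"
    proof (cases "z1 = z2")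
      case True then show ?thesis by simp
    next
      case False
      have "\<bar>M (z1, t (j+1)) + M (z2, t j) - M (z2, t (j+1)) - M (z1, t j)\<bar> \<le> L * \<bar>z1 - z2\<bar> * \<bar>t (j+1) - t j\<bar>"
        by (rule mdd_num[OF False dt H[OF False dt gT gT gT gT]])
      then show ?thesis unfolding at by (smt (verit) mult.commute mult.assoc)
    qed
  qed
  have "mdd P2 x1 x2 y1 y2 = mdd (\<lambda>(y,x). PL t (\<lambda>j. M (x, t j)) y) y1 y2 x1 x2"
    unfolding P2_def mdd_def by (simp add: algebra_simps)
  then have b2: "\<bar>mdd P2 x1 x2 y1 y2\<bar> \<le> L" using b2' by simp
  have "mdd (coons s t M) x1 x2 y1 y2 = mdd P1 x1 x2 y1 y2 + mdd P2 x1 x2 y1 y2 - mdd P12 x1 x2 y1 y2"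
    unfolding C by (rule mdd_lin)
  then show ?thesis using b1 b2 b12 by linarith
qed

lemma coons_comp: "coons s t N p \<bullet> b = coons s t (\<lambda>q. N q \<bullet> b) p"
  by (cases p) (simp add: coons_def Let_def inner_simps)

lemma mdd_comp: "mdd N a1 a2 c1 c2 \<bullet> e = mdd (\<lambda>q. N q \<bullet> e) a1 a2 c1 c2"
  by (simp add: mdd_def inner_simps)

lemma infnorm_le_comp: "(\<And>b. b \<in> Basis \<Longrightarrow> \<bar>x \<bullet> b\<bar> \<le> L) \<Longrightarrow> infnorm x \<le> L"
  by (simp add: infnorm_Max)

lemma refine_even: "refine \<alpha> \<beta> s (2*i) = (1 - \<alpha> i) * s i + \<alpha> i * s (i+1)"
  by (simp add: refine_def Let_def)

lemma refine_odd: "refine \<alpha> \<beta> s (2*i+1) = (1 - \<beta> i) * s i + \<beta> i * s (i+1)"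
proof -
  have "(2*i+1) div 2 = i" by simp
  then show ?thesis by (simp add: refine_def Let_def)
qed

lemma refine_good: assumes W: "weightW \<alpha> \<beta>" and g: "good s" shows "good (refine \<alpha> \<beta> s)"
proof -
  obtain \<delta> where d: "\<delta> > 0" "\<And>i. \<delta> \<le> \<alpha> i \<and> \<delta> \<le> 1 - \<beta> i \<and> \<delta> \<le> \<beta> i - \<alpha> i"
    using W unfolding weightW_def by blast
  have a: "0 < \<alpha> i" "\<alpha> i < \<beta> i" "\<beta> i < 1" for i using d[of] d(2)[of i] by linarith+
  have lt: "s i < s (i+1)" for i using good_lt[OF g] .
  let ?r = "refine \<alpha> \<beta> s"
  have e_lo: "s i < ?r (2*i)" for i
  proof -
    have "?r (2*i) = s i + \<alpha> i * (s (i+1) - s i)" unfolding refine_even by (simp add: algebra_simps)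
    moreover have "0 < \<alpha> i * (s (i+1) - s i)" using a(1)[of i] lt[of i] by simp
    ultimately show ?thesis by simp
  qed
  have o_hi: "?r (2*i+1) < s (i+1)" for i
  proof -
    have "?r (2*i+1) = s (i+1) - (1 - \<beta> i) * (s (i+1) - s i)" unfolding refine_odd by (simp add: algebra_simps)
    moreover have "0 < (1 - \<beta> i) * (s (i+1) - s i)" using a(3)[of i] lt[of i] by simp
    ultimately show ?thesis by simp
  qed
  have eo: "?r (2*i) < ?r (2*i+1)" for i
  proof -
    have "?r (2*i+1) - ?r (2*i) = (\<beta> i - \<alpha> i) * (s (i+1) - s i)"
      unfolding refine_odd refine_even by (simp add: algebra_simps)
    moreover have "0 < (\<beta> i - \<alpha> i) * (s (i+1) - s i)" using a(2)[of i] lt[of i] by simp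
    ultimately show ?thesis by simp
  qed
  have step: "?r m < ?r (m+1)" for m
  proof (cases "even m")
    case True
    then obtain i where m: "m = 2*i" by (metis evenE)
    show ?thesis using eo[of i] m by simp
  next
    case False
    then obtain i where m: "m = 2*i+1" by (metis oddE)
    have "m + 1 = 2*(i+1)" using m by simp
    then show ?thesis using o_hi[of i] e_lo[of "i+1"] m by (metis less_trans)
  qed
  have up: "\<exists>i. x < ?r i" for x
  proof -
    obtain i where "x < s i" using g unfolding good_def by blast
    then show ?thesis using e_lo[of i] by (meson less_trans)
  qed
  have down: "\<exists>i. ?r i < x" for x
  proof -
    obtain j where j: "s j < x" using g unfolding good_def by blast
    have "?r (2*(j-1)+1) < s j" using o_hi[of "j-1"] by simp
    then show ?thesis using j by (meson less_trans)
  qed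
  show ?thesis unfolding good_def using step up down by blast
qed

lemma good_id: "good (\<lambda>i. of_int i)"
  unfolding good_def
proof (intro conjI allI)
  fix x :: real
  show "\<exists>i. x < of_int i" by (rule exI[of _ "\<lceil>x\<rceil> + 1"]) linarith
  show "\<exists>i. of_int i < x" by (rule exI[of _ "\<lfloor>x\<rfloor> - 1"]) linarith
qed simp

theorem corollary3:
  fixes s t :: "nat \<Rightarrow> int \<Rightarrow> real"
    and \<alpha>s \<beta>s \<alpha>t \<beta>t :: "nat \<Rightarrow> int \<Rightarrow> real"
    and N :: "nat \<Rightarrow> real \<times> real \<Rightarrow> real ^ 'm"
    and L :: real
  assumes W: "\<And>k. weightW (\<alpha>s k) (\<beta>s k)" "\<And>k. weightW (\<alpha>t k) (\<beta>t k)"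
    and s0: "\<And>i. s 0 i = of_int i" and t0: "\<And>j. t 0 j = of_int j"
    and sS: "\<And>k. s (Suc k) = refine (\<alpha>s k) (\<beta>s k) (s k)"
    and tS: "\<And>k. t (Suc k) = refine (\<alpha>t k) (\<beta>t k) (t k)"
    and NS: "\<And>k p. p \<in> grid (s (Suc k)) (t (Suc k)) \<Longrightarrow>
               N (Suc k) p = coons (s k) (t k) (N k) p"
    and C0: "C0_net (s 0) (t 0) (N 0)"
    and B0: "BMSDD (s 0) (t 0) (N 0) L"
  shows "\<forall>k. BMSDD (s k) (t k) (N k) (3 ^ k * L)"
proof -
  have gd: "good (s k) \<and> good (t k)" for k
  proof (induction k)
    case 0
    have "s 0 = (\<lambda>i. of_int i)" "t 0 = (\<lambda>i. of_int i)" using s0 t0 by auto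
    then show ?case using good_id by simp
  next
    case (Suc k)
    then show ?case using refine_good W sS tS by metis
  qed
  show ?thesis
  proof
    fix k show "BMSDD (s k) (t k) (N k) (3 ^ k * L)"
    proof (induction k)
      case 0 then show ?case using B0 by simp
    next
      case (Suc k)
      show ?case unfolding BMSDD_def
      proof (intro allI impI)
        fix \<sigma>1 \<sigma>2 \<tau>1 \<tau>2
        assume x: "\<sigma>1 \<noteq> \<sigma>2" and y: "\<tau>1 \<noteq> \<tau>2"
          and p: "(\<sigma>1, \<tau>1) \<in> grid (s (Suc k)) (t (Suc k))" "(\<sigma>1, \<tau>2) \<in> grid (s (Suc k)) (t (Suc k))"
            "(\<sigma>2, \<tau>1) \<in> grid (s (Suc k)) (t (Suc k))" "(\<sigma>2, \<tau>2) \<in> grid (s (Suc k)) (t (Suc k))"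
        have e: "mdd (N (Suc k)) \<sigma>1 \<sigma>2 \<tau>1 \<tau>2 = mdd (coons (s k) (t k) (N k)) \<sigma>1 \<sigma>2 \<tau>1 \<tau>2"
          unfolding mdd_def using NS[OF p(1)] NS[OF p(2)] NS[OF p(3)] NS[OF p(4)] by simp
        show "infnorm (mdd (N (Suc k)) \<sigma>1 \<sigma>2 \<tau>1 \<tau>2) \<le> 3 ^ Suc k * L"
          unfolding e
        proof (rule infnorm_le_comp)
          fix b :: "real ^ 'm" assume b: "b \<in> Basis"
          have H: "\<bar>mdd (\<lambda>q. N k q \<bullet> b) a1 a2 c1 c2\<bar> \<le> 3 ^ k * L"
            if "a1 \<noteq> a2" "c1 \<noteq> c2" "(a1, c1) \<in> grid (s k) (t k)" "(a1, c2) \<in> grid (s k) (t k)"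
              "(a2, c1) \<in> grid (s k) (t k)" "(a2, c2) \<in> grid (s k) (t k)" for a1 a2 c1 c2
          proof -
            have "infnorm (mdd (N k) a1 a2 c1 c2) \<le> 3 ^ k * L"
              using Suc that unfolding BMSDD_def by blast
            moreover have "\<bar>mdd (N k) a1 a2 c1 c2 \<bullet> b\<bar> \<le> infnorm (mdd (N k) a1 a2 c1 c2)"
              using Basis_le_infnorm[OF b] .
            ultimately show ?thesis unfolding mdd_comp by linarith
          qed
          have "\<bar>mdd (coons (s k) (t k) (\<lambda>q. N k q \<bullet> b)) \<sigma>1 \<sigma>2 \<tau>1 \<tau>2\<bar> \<le> 3 * (3 ^ k * L)"
            by (rule core[OF conjunct1[OF gd] conjunct2[OF gd] H x y])
          then show "\<bar>mdd (coons (s k) (t k) (N k)) \<sigma>1 \<sigma>2 \<tau>1 \<tau>2 \<bullet> b\<bar> \<le> 3 ^ Suc k * L"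
            unfolding mdd_comp coons_comp by simp
        qed
      qed
    qed
  qed
qed

end
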